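(* Let $k>0$ and consider the system of ODEs, for $r>0$, $\theta$, $z$, $p_R$, $p_S$ real, \[ \dot r = p_R,\quad \dot\theta = \frac{p_S}{r^2},\quad \dot z = \frac{p_S}{2},\quad \dot p_R = \frac{p_S^2}{r^3} - \frac{2kr^3}{(r^4+16z^2)^{3/2}},\quad \dot p_S = -\frac{8kr^2 z}{(r^4+16z^2)^{3/2}}. \] Then the following functions, quadratic in the momenta, are first integrals of the system: \begin{align*} F_1 &= \Big(p_Rp_Sr-2p_R^2z+\frac{2p_S^2z}{r^2}\Big)\cos(2\theta) + \Big(\frac{4p_Rp_Sz}{r}-p_S^2+\frac{kr^2}{\sqrt{r^4+16z^2}}\Big)\sin(2\theta),\\ F_2 &= -\Big(p_Rp_Sr-2p_R^2z+\frac{2p_S^2z}{r^2}\Big)\sin(2\theta) + \Big(\frac{4p_Rp_Sz}{r}-p_S^2+\frac{kr^2}{\sqrt{r^4+16z^2}}\Big)\cos(2\theta),\\ F_3 &= (2zp_R-rp_S)^2 + 4z^2\Big(\frac{p_S^2}{r^2}+\frac{2k}{\sqrt{r^4+16z^2}}\Big). \end{align*} Moreover, with $H = \frac12\big(p_R^2+\frac{p_S^2}{r^2}\big) - \frac{k}{\sqrt{r^4+16z^2}}$, any three of $H,F_1,F_2,F_3$ are functionally independent almost everywhere, and they satisfy the relation $F_1^2+F_2^2 = 2HF_3 + k^2$.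
   Context: A first integral is a function of $(r,\theta,z,p_R,p_S)$ constant along all solutions. The system describes nonholonomic motion on the Heisenberg group in the potential $-k/\sqrt{r^4+16z^2}$ in cylindrical coordinates, with Hamiltonian $H$. *)

theory Defs
  imports "HOL-Analysis.Analysis"
begin

text \<open>Phase space points (r, theta, z, p_R, p_S); the physical domain is r > 0.\<close>
type_synonym st = "real \<times> real \<times> real \<times> real \<times> real"

definition hvf :: "real \<Rightarrow> st \<Rightarrow> st" where
  "hvf k = (\<lambda>(r, \<theta>, z, pR, pS).
     (pR,
      pS / r\<^sup>2,
      pS / 2,
      pS\<^sup>2 / r ^ 3 - 2 * k * r ^ 3 / (r ^ 4 + 16 * z\<^sup>2) powr (3/2),
      - 8 * k * r\<^sup>2 * z / (r ^ 4 + 16 * z\<^sup>2) powr (3/2)))"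

definition in_dom :: "st \<Rightarrow> bool" where
  "in_dom x \<longleftrightarrow> fst x > 0"

definition is_solution :: "real \<Rightarrow> (real \<Rightarrow> st) \<Rightarrow> real set \<Rightarrow> bool" where
  "is_solution k \<gamma> I \<longleftrightarrow>
     (\<forall>t\<in>I. in_dom (\<gamma> t) \<and> (\<gamma> has_vector_derivative hvf k (\<gamma> t)) (at t within I))"

definition first_integral :: "real \<Rightarrow> (st \<Rightarrow> real) \<Rightarrow> bool" where
  "first_integral k F \<longleftrightarrow>
     (\<forall>\<gamma> I. is_interval I \<and> is_solution k \<gamma> I \<longrightarrow> (\<forall>s\<in>I. \<forall>t\<in>I. F (\<gamma> s) = F (\<gamma> t)))"

definition Ham :: "real \<Rightarrow> st \<Rightarrow> real" where
  "Ham k = (\<lambda>(r, \<theta>, z, pR, pS).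
     (pR\<^sup>2 + pS\<^sup>2 / r\<^sup>2) / 2 - k / sqrt (r ^ 4 + 16 * z\<^sup>2))"

definition F1 :: "real \<Rightarrow> st \<Rightarrow> real" where
  "F1 k = (\<lambda>(r, \<theta>, z, pR, pS).
     (pR * pS * r - 2 * pR\<^sup>2 * z + 2 * pS\<^sup>2 * z / r\<^sup>2) * cos (2 * \<theta>)
     + (4 * pR * pS * z / r - pS\<^sup>2 + k * r\<^sup>2 / sqrt (r ^ 4 + 16 * z\<^sup>2)) * sin (2 * \<theta>))"

definition F2 :: "real \<Rightarrow> st \<Rightarrow> real" where
  "F2 k = (\<lambda>(r, \<theta>, z, pR, pS).
     - (pR * pS * r - 2 * pR\<^sup>2 * z + 2 * pS\<^sup>2 * z / r\<^sup>2) * sin (2 * \<theta>)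
     + (4 * pR * pS * z / r - pS\<^sup>2 + k * r\<^sup>2 / sqrt (r ^ 4 + 16 * z\<^sup>2)) * cos (2 * \<theta>))"

definition F3 :: "real \<Rightarrow> st \<Rightarrow> real" where
  "F3 k = (\<lambda>(r, \<theta>, z, pR, pS).
     (2 * z * pR - r * pS)\<^sup>2 + 4 * z\<^sup>2 * (pS\<^sup>2 / r\<^sup>2 + 2 * k / sqrt (r ^ 4 + 16 * z\<^sup>2)))"

definition func_indep_at :: "(st \<Rightarrow> real) list \<Rightarrow> st \<Rightarrow> bool" where
  "func_indep_at fs x \<longleftrightarrow>
     (\<forall>f\<in>set fs. f differentiable (at x)) \<and>
     (\<forall>c :: nat \<Rightarrow> real.
        (\<forall>v. (\<Sum>i<length fs. c i * frechet_derivative (fs ! i) (at x) v) = 0)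
        \<longrightarrow> (\<forall>i<length fs. c i = 0))"

definition func_indep_ae :: "(st \<Rightarrow> real) list \<Rightarrow> bool" where
  "func_indep_ae fs \<longleftrightarrow> (AE x in lborel. in_dom x \<longrightarrow> func_indep_at fs x)"

end

theory Submission imports Defs "HOL-Computational_Algebra.Polynomial" begin

definition uu :: "real \<Rightarrow> real \<Rightarrow> real" where "uu r z = 1 / sqrt (r^4 + 16*z^2)"

definition dot :: "st \<Rightarrow> st \<Rightarrow> real" where
 "dot a b = fst a * fst b + fst (snd a) * fst (snd b) + fst (snd (snd a)) * fst (snd (snd b))
   + fst (snd (snd (snd a))) * fst (snd (snd (snd b))) + snd (snd (snd (snd a))) * snd (snd (snd (snd b)))"

lemma powr32: "w > 0 \<Longrightarrow> w powr (3/2) = sqrt w ^ 3"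
proof -
  assume w: "w > 0"
  have "w powr (3/2) = w powr (1 + 1/2)" by simp
  also have "\<dots> = w powr 1 * w powr (1/2)" by (rule powr_add)
  also have "\<dots> = w * sqrt w" using w by (simp add: powr_half_sqrt)
  also have "\<dots> = sqrt w ^ 3" using w by (simp add: power3_eq_cube)
  finally show ?thesis .
qed

lemma pos_w: "r > 0 \<Longrightarrow> r^4 + 16*z^2 > (0::real)"
  by (simp add: add_pos_nonneg)

lemma powr32u: "r > 0 \<Longrightarrow> (r^4 + 16*z^2) powr (3/2) = 1 / (uu r z)^3"
  using powr32[OF pos_w] by (simp add: uu_def power_one_over)

lemma uu_rel: "r > 0 \<Longrightarrow> (uu r z)^2 * (r^4 + 16*z^2) = 1"
  using pos_w[of r z] by (simp add: uu_def power_one_over)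

definition gH :: "real \<Rightarrow> st \<Rightarrow> st" where
 "gH k = (\<lambda>(r,t,z,pR,pS). let u = uu r z in
   ((- (pS^2 / (r^3)) + 2 * r^3 * k * (uu r z)^3), 0, (16 * z * k * (uu r z)^3), (pR), (pS / (r^2))))"

lemma Ham_alt: "Ham k = (\<lambda>x. ((fst (snd (snd (snd x))))\<^sup>2 + (snd (snd (snd (snd x))))\<^sup>2 / (fst x)\<^sup>2) / 2 - k / sqrt ((fst x) ^ 4 + 16 * (fst (snd (snd x)))\<^sup>2))"
  by (auto simp: Ham_def fun_eq_iff split: prod.splits)

definition gF1 :: "real \<Rightarrow> st \<Rightarrow> st" where
 "gF1 k = (\<lambda>(r,t,z,pR,pS). let u = uu r z in
   ((- (4 * z * pS^2 * cos (2*t) / (r^3)) - 4 * z * pR * pS * sin (2*t) / (r^2) + pR * pS * cos (2*t) + 2 * r * k * (uu r z) * sin (2*t) - 2 * r^5 * k * (uu r z)^3 * sin (2*t)), (- (4 * z * pS^2 * sin (2*t) / (r^2)) + 8 * z * pR * pS * cos (2*t) / (r) - 2 * pS^2 * cos (2*t) + 4 * z * pR^2 * sin (2*t) - 2 * r * pR * pS * sin (2*t) + 2 * r^2 * k * (uu r z) * cos (2*t)), (2 * pS^2 * cos (2*t) / (r^2) + 4 * pR * pS * sin (2*t) / (r) - 2 * pR^2 * cos (2*t) - 16 * r^2 * z * k * (uu r z)^3 * sin (2*t)), (4 * z * pS * sin (2*t) / (r) - 4 * z * pR * cos (2*t) + r * pS * cos (2*t)), (4 * z * pS * cos (2*t)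 / (r^2) + 4 * z * pR * sin (2*t) / (r) - 2 * pS * sin (2*t) + r * pR * cos (2*t))))"

lemma F1_alt: "F1 k = (\<lambda>x. ((fst (snd (snd (snd x)))) * (snd (snd (snd (snd x)))) * (fst x) - 2 * (fst (snd (snd (snd x))))\<^sup>2 * (fst (snd (snd x))) + 2 * (snd (snd (snd (snd x))))\<^sup>2 * (fst (snd (snd x))) / (fst x)\<^sup>2) * cos (2 * (fst (snd x))) + (4 * (fst (snd (snd (snd x)))) * (snd (snd (snd (snd x)))) * (fst (snd (snd x))) / (fst x) - (snd (snd (snd (snd x))))\<^sup>2 + k * (fst x)\<^sup>2 / sqrt ((fst x) ^ 4 + 16 * (fst (snd (snd x)))\<^sup>2)) * sin (2 * (fst (snd x))))"
  by (auto simp: F1_def fun_eq_iff split: prod.splits)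

definition gF2 :: "real \<Rightarrow> st \<Rightarrow> st" where
 "gF2 k = (\<lambda>(r,t,z,pR,pS). let u = uu r z in
   ((4 * z * pS^2 * sin (2*t) / (r^3) - 4 * z * pR * pS * cos (2*t) / (r^2) - pR * pS * sin (2*t) + 2 * r * k * (uu r z) * cos (2*t) - 2 * r^5 * k * (uu r z)^3 * cos (2*t)), (- (4 * z * pS^2 * cos (2*t) / (r^2)) - 8 * z * pR * pS * sin (2*t) / (r) + 2 * pS^2 * sin (2*t) + 4 * z * pR^2 * cos (2*t) - 2 * r * pR * pS * cos (2*t) - 2 * r^2 * k * (uu r z) * sin (2*t)), (- (2 * pS^2 * sin (2*t) / (r^2)) + 4 * pR * pS * cos (2*t) / (r) + 2 * pR^2 * sin (2*t) - 16 * r^2 * z * k * (uu r z)^3 * cos (2*t)), (4 * z * pS * cos (2*t) / (r) + 4 * z * pR * sin (2*t) - r * pS * sin (2*t)), (- (4 * z * pS * sin (2*t) / (r^2)) + 4 * z * pR * cos (2*t) / (r) - 2 * pS * cos (2*t) - r * pR * sin (2*t))))"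

lemma F2_alt: "F2 k = (\<lambda>x. - ((fst (snd (snd (snd x)))) * (snd (snd (snd (snd x)))) * (fst x) - 2 * (fst (snd (snd (snd x))))\<^sup>2 * (fst (snd (snd x))) + 2 * (snd (snd (snd (snd x))))\<^sup>2 * (fst (snd (snd x))) / (fst x)\<^sup>2) * sin (2 * (fst (snd x))) + (4 * (fst (snd (snd (snd x)))) * (snd (snd (snd (snd x)))) * (fst (snd (snd x))) / (fst x) - (snd (snd (snd (snd x))))\<^sup>2 + k * (fst x)\<^sup>2 / sqrt ((fst x) ^ 4 + 16 * (fst (snd (snd x)))\<^sup>2)) * cos (2 * (fst (snd x))))"
  by (auto simp: F2_def fun_eq_iff split: prod.splits)

definition gF3 :: "real \<Rightarrow> st \<Rightarrow> st" where
 "gF3 k = (\<lambda>(r,t,z,pR,pS). let u = uu r z in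
   ((- (8 * z^2 * pS^2 / (r^3)) - 4 * z * pR * pS + 2 * r * pS^2 - 16 * r^3 * z^2 * k * (uu r z)^3), 0, (8 * z * pS^2 / (r^2) + 16 * z * k * (uu r z) + 8 * z * pR^2 - 128 * z^3 * k * (uu r z)^3 - 4 * r * pR * pS), (8 * z^2 * pR - 4 * r * z * pS), (8 * z^2 * pS / (r^2) - 4 * r * z * pR + 2 * r^2 * pS)))"

lemma F3_alt: "F3 k = (\<lambda>x. (2 * (fst (snd (snd x))) * (fst (snd (snd (snd x)))) - (fst x) * (snd (snd (snd (snd x)))))\<^sup>2 + 4 * (fst (snd (snd x)))\<^sup>2 * ((snd (snd (snd (snd x))))\<^sup>2 / (fst x)\<^sup>2 + 2 * k / sqrt ((fst x) ^ 4 + 16 * (fst (snd (snd x)))\<^sup>2)))"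
  by (auto simp: F3_def fun_eq_iff split: prod.splits)

lemma deriv_H: assumes "r > 0" shows "(Ham k has_derivative (\<lambda>h. dot (gH k (r,t,z,pR,pS)) h)) (at (r,t,z,pR,pS))"
proof -
  have pos: "r^4 + 16*z^2 > 0" using assms by (simp add: add_pos_nonneg)
  have pos': "r^4 + 16*z^2 \<noteq> 0" using pos by simp
  have rne: "r \<noteq> 0" using assms by simp
  obtain S where S: "sqrt (r^4 + 16*z^2) = S" "S > 0" "S^2 = r^4 + 16*z^2" "S \<noteq> 0"
    using pos by auto
  show ?thesis
  unfolding Ham_alt
  apply (rule has_derivative_eq_rhs)
  apply (rule derivative_eq_intros refl | simp add: pos pos' assms rne)+
  apply (rule ext)
  subgoal for h
  apply (simp add: dot_def gH_def uu_def Let_def S(1))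
  apply (simp add: field_simps rne S(4))
  apply algebra
  done
  done
qed

lemma deriv_F1: assumes "r > 0" shows "(F1 k has_derivative (\<lambda>h. dot (gF1 k (r,t,z,pR,pS)) h)) (at (r,t,z,pR,pS))"
proof -
  have pos: "r^4 + 16*z^2 > 0" using assms by (simp add: add_pos_nonneg)
  have pos': "r^4 + 16*z^2 \<noteq> 0" using pos by simp
  have rne: "r \<noteq> 0" using assms by simp
  obtain S where S: "sqrt (r^4 + 16*z^2) = S" "S > 0" "S^2 = r^4 + 16*z^2" "S \<noteq> 0"
    using pos by auto
  show ?thesis
  unfolding F1_alt
  apply (rule has_derivative_eq_rhs)
  apply (rule derivative_eq_intros refl | simp add: pos pos' assms rne)+
  apply (rule ext)
  subgoal for h
  apply (simp add: dot_def gF1_def uu_def Let_def S(1))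
  apply (simp add: field_simps rne S(4))
  apply algebra
  done
  done
qed

lemma deriv_F2: assumes "r > 0" shows "(F2 k has_derivative (\<lambda>h. dot (gF2 k (r,t,z,pR,pS)) h)) (at (r,t,z,pR,pS))"
proof -
  have pos: "r^4 + 16*z^2 > 0" using assms by (simp add: add_pos_nonneg)
  have pos': "r^4 + 16*z^2 \<noteq> 0" using pos by simp
  have rne: "r \<noteq> 0" using assms by simp
  obtain S where S: "sqrt (r^4 + 16*z^2) = S" "S > 0" "S^2 = r^4 + 16*z^2" "S \<noteq> 0"
    using pos by auto
  show ?thesis
  unfolding F2_alt
  apply (rule has_derivative_eq_rhs)
  apply (rule derivative_eq_intros refl | simp add: pos pos' assms rne)+
  apply (rule ext)
  subgoal for h
  apply (simp add: dot_def gF2_def uu_def Let_def S(1))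
  apply (simp add: field_simps rne S(4))
  apply algebra
  done
  done
qed

lemma deriv_F3: assumes "r > 0" shows "(F3 k has_derivative (\<lambda>h. dot (gF3 k (r,t,z,pR,pS)) h)) (at (r,t,z,pR,pS))"
proof -
  have pos: "r^4 + 16*z^2 > 0" using assms by (simp add: add_pos_nonneg)
  have pos': "r^4 + 16*z^2 \<noteq> 0" using pos by simp
  have rne: "r \<noteq> 0" using assms by simp
  obtain S where S: "sqrt (r^4 + 16*z^2) = S" "S > 0" "S^2 = r^4 + 16*z^2" "S \<noteq> 0"
    using pos by auto
  show ?thesis
  unfolding F3_alt
  apply (rule has_derivative_eq_rhs)
  apply (rule derivative_eq_intros refl | simp add: pos pos' assms rne)+
  apply (rule ext)
  subgoal for h
  apply (simp add: dot_def gF3_def uu_def Let_def S(1))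
  apply (simp add: field_simps rne S(4))
  apply algebra
  done
  done
qed

lemma flow_F1: assumes "r > 0" shows "dot (gF1 k (r,t,z,pR,pS)) (hvf k (r,t,z,pR,pS)) = 0"
proof -
  have rne: "r \<noteq> 0" using assms by simp
  obtain ir where ir: "inverse r = ir" by blast
  have rir: "r * ir = 1" using ir rne by auto
  have d1: "\<And>a::real. a / r = a * ir" using ir by (simp add: divide_inverse)
  have d2: "\<And>(a::real) n. a / r ^ n = a * ir ^ n" unfolding ir[symmetric] by (metis divide_inverse power_inverse)
  have d3: "\<And>a::real. a / (r^4 + 16*z^2) powr (3/2) = a * (uu r z)^3" using powr32u[OF assms] by simp
  obtain cc ss where cs: "cos (2*t) = cc" "sin (2*t) = ss" by blast
  have cs1: "cc^2 + ss^2 = 1" using cs sin_cos_squared_add[of "2*t"] by simp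
  have d4: "\<And>a::real. a / sqrt (r^4 + 16*z^2) = a * uu r z" by (simp add: uu_def)
  have "dot (gF1 k (r,t,z,pR,pS)) (hvf k (r,t,z,pR,pS)) = (r*ir - 1) * (2 * pS * k * (uu r z) * cc + pS^3 * cc * ir^2 - 2 * pR * pS^2 * ss * ir - 32 * z^2 * pS * k * (uu r z)^3 * cc + 2 * r * pS * k * (uu r z) * cc * ir - 32 * r * z^2 * pS * k * (uu r z)^3 * cc * ir - 32 * r * z^2 * pR * k * (uu r z)^3 * ss - 8 * r^2 * z * pS * k * (uu r z)^3 * ss) + ((uu r z)^2 * (r^4 + 16*z^2) - 1) * (- (2 * pS * k * (uu r z) * cc) - 2 * r * pR * k * (uu r z) * ss) + (cc^2 + ss^2 - 1) * 0"
    apply (simp add: dot_def gF1_def hvf_def Let_def d1 d2 d3 d4 cs)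
    apply algebra
    done
  then show ?thesis using rir uu_rel[OF assms] by simp
qed

lemma flow_F2: assumes "r > 0" shows "dot (gF2 k (r,t,z,pR,pS)) (hvf k (r,t,z,pR,pS)) = 0"
proof -
  have rne: "r \<noteq> 0" using assms by simp
  obtain ir where ir: "inverse r = ir" by blast
  have rir: "r * ir = 1" using ir rne by auto
  have d1: "\<And>a::real. a / r = a * ir" using ir by (simp add: divide_inverse)
  have d2: "\<And>(a::real) n. a / r ^ n = a * ir ^ n" unfolding ir[symmetric] by (metis divide_inverse power_inverse)
  have d3: "\<And>a::real. a / (r^4 + 16*z^2) powr (3/2) = a * (uu r z)^3" using powr32u[OF assms] by simp
  obtain cc ss where cs: "cos (2*t) = cc" "sin (2*t) = ss" by blast
  have cs1: "cc^2 + ss^2 = 1" using cs sin_cos_squared_add[of "2*t"] by simp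
  have d4: "\<And>a::real. a / sqrt (r^4 + 16*z^2) = a * uu r z" by (simp add: uu_def)
  have "dot (gF2 k (r,t,z,pR,pS)) (hvf k (r,t,z,pR,pS)) = (r*ir - 1) * (- (2 * pS * k * (uu r z) * ss) - pS^3 * ss * ir^2 - 2 * pR * pS^2 * cc * ir + 32 * z^2 * pS * k * (uu r z)^3 * ss - 2 * r * pS * k * (uu r z) * ss * ir + 32 * r * z^2 * pS * k * (uu r z)^3 * ss * ir - 32 * r * z^2 * pR * k * (uu r z)^3 * cc - 8 * r^2 * z * pS * k * (uu r z)^3 * cc) + ((uu r z)^2 * (r^4 + 16*z^2) - 1) * (2 * pS * k * (uu r z) * ss - 2 * r * pR * k * (uu r z) * cc) + (cc^2 + ss^2 - 1) * 0"
    apply (simp add: dot_def gF2_def hvf_def Let_def d1 d2 d3 d4 cs)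
    apply algebra
    done
  then show ?thesis using rir uu_rel[OF assms] by simp
qed

lemma flow_F3: assumes "r > 0" shows "dot (gF3 k (r,t,z,pR,pS)) (hvf k (r,t,z,pR,pS)) = 0"
proof -
  have rne: "r \<noteq> 0" using assms by simp
  obtain ir where ir: "inverse r = ir" by blast
  have rir: "r * ir = 1" using ir rne by auto
  have d1: "\<And>a::real. a / r = a * ir" using ir by (simp add: divide_inverse)
  have d2: "\<And>(a::real) n. a / r ^ n = a * ir ^ n" unfolding ir[symmetric] by (metis divide_inverse power_inverse)
  have d3: "\<And>a::real. a / (r^4 + 16*z^2) powr (3/2) = a * (uu r z)^3" using powr32u[OF assms] by simp
  obtain cc ss where cs: "cos (2*t) = cc" "sin (2*t) = ss" by blast
  have cs1: "cc^2 + ss^2 = 1" using cs sin_cos_squared_add[of "2*t"] by simp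
  have d4: "\<And>a::real. a / sqrt (r^4 + 16*z^2) = a * uu r z" by (simp add: uu_def)
  have "dot (gF3 k (r,t,z,pR,pS)) (hvf k (r,t,z,pR,pS)) = (r*ir - 1) * (- (4 * z * pS^3 * ir^2) - 64 * z^3 * pS * k * (uu r z)^3 - 64 * r * z^3 * pS * k * (uu r z)^3 * ir) + ((uu r z)^2 * (r^4 + 16*z^2) - 1) * (- (8 * z * pS * k * (uu r z))) + (cc^2 + ss^2 - 1) * 0"
    apply (simp add: dot_def gF3_def hvf_def Let_def d1 d2 d3 d4 cs)
    apply algebra
    done
  then show ?thesis using rir uu_rel[OF assms] by simp
qed

lemma rel_F: assumes "r > 0" shows "(F1 k (r,t,z,pR,pS))\<^sup>2 + (F2 k (r,t,z,pR,pS))\<^sup>2 = 2 * Ham k (r,t,z,pR,pS) * F3 k (r,t,z,pR,pS) + k\<^sup>2"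
proof -
  have rne: "r \<noteq> 0" using assms by simp
  obtain ir where ir: "inverse r = ir" by blast
  have rir: "r * ir = 1" using ir rne by auto
  have d1: "\<And>a::real. a / r = a * ir" using ir by (simp add: divide_inverse)
  have d2: "\<And>(a::real) n. a / r ^ n = a * ir ^ n" unfolding ir[symmetric] by (metis divide_inverse power_inverse)
  have d3: "\<And>a::real. a / (r^4 + 16*z^2) powr (3/2) = a * (uu r z)^3" using powr32u[OF assms] by simp
  obtain cc ss where cs: "cos (2*t) = cc" "sin (2*t) = ss" by blast
  have cs1: "cc^2 + ss^2 = 1" using cs sin_cos_squared_add[of "2*t"] by simp
  have d4: "\<And>a::real. a / sqrt (r^4 + 16*z^2) = a * uu r z" by (simp add: uu_def)
  have "(F1 k (r,t,z,pR,pS))\<^sup>2 + (F2 k (r,t,z,pR,pS))\<^sup>2 - (2 * Ham k (r,t,z,pR,pS) * F3 k (r,t,z,pR,pS) + k\<^sup>2) = (r*ir - 1) * (- (pS^4) + 4 * z * pR * pS^3 * ir + 4 * z * pR * pS^3 * ss^2 * ir + 4 * z * pR * pS^3 * cc^2 * ir - r * pS^4 * ir + 8 * r * z * pR * pS * k * (uu r z) * ss^2 + 8 * r * z * pR * pS * k * (uu r z) * cc^2) + ((uu r z)^2 * (r^4 + 16*z^2) - 1) * (k^2 * ss^2 + k^2 * cc^2) + (cc^2 + ss^2 - 1) * (k^2 + pS^4 - 4 * z * pR * pS^3 * ir - 16 * z^2 * k^2 * (uu r z)^2 + 4 * z^2 * pS^4 * ir^4 + 8 * z^2 * pR^2 *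 pS^2 * ir^2 + 4 * z^2 * pR^4 + 8 * r * z * pR * pS * k * (uu r z) - 4 * r * z * pR^3 * pS - 2 * r^2 * pS^2 * k * (uu r z) + r^2 * pR^2 * pS^2)"
    apply (simp add: F1_def F2_def F3_def Ham_def d1 d2 d4 cs)
    apply algebra
    done
  then show ?thesis using rir uu_rel[OF assms] cs1 by simp
qed

lemma AE_lborel_pair:
  fixes Q :: "('a::euclidean_space \<times> 'b::euclidean_space) \<Rightarrow> bool"
  assumes m: "Measurable.pred borel Q" and ae: "AE a in lborel. AE b in lborel. Q (a,b)"
  shows "AE x in lborel. Q x"
proof -
  have "AE x in lborel \<Otimes>\<^sub>M lborel. Q x"
  proof (rule lborel_pair.AE_pair_measure)
    show "{x \<in> space (lborel \<Otimes>\<^sub>M lborel). Q x} \<in> sets (lborel \<Otimes>\<^sub>M lborel)"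
      unfolding lborel_prod using m by measurable
    show "AE a in lborel. AE b in lborel. Q (a,b)" by (fact ae)
  qed
  then show ?thesis unfolding lborel_prod .
qed

lemma AE_countable: "countable {x. \<not> P x} \<Longrightarrow> AE x in lborel. P (x::real)"
  by (rule AE_I'[OF countable_imp_null_set_lborel]) auto

lemma pred_Pair:
  fixes P :: "('a::euclidean_space \<times> 'b::euclidean_space) \<Rightarrow> bool"
  assumes "Measurable.pred borel P" shows "Measurable.pred borel (\<lambda>y. P (r, y))"
proof -
  have "(\<lambda>y::'b. (r, y)) \<in> borel_measurable borel"
    by (intro borel_measurable_continuous_onI continuous_intros)
  then show ?thesis using assms by (rule measurable_compose)
qed

lemma AE_st:
  fixes P :: "st \<Rightarrow> bool"
  assumes meas: "Measurable.pred borel P"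
  and H: "\<And>r t. AE z in lborel. \<forall>pR. countable {pS. \<not> P (r,t,z,pR,pS)}"
  shows "AE x in lborel. P x"
proof (rule AE_lborel_pair[OF meas], rule AE_I2)
  fix r
  have m1: "Measurable.pred borel (\<lambda>y. P (r,y))" by (rule pred_Pair[OF meas])
  show "AE y in lborel. P (r,y)"
  proof (rule AE_lborel_pair[OF m1], rule AE_I2)
    fix t
    have m2: "Measurable.pred borel (\<lambda>y. P (r,t,y))" using pred_Pair[OF m1, of t] by simp
    show "AE y in lborel. P (r,t,y)"
    proof (rule AE_lborel_pair[OF m2])
      show "AE z in lborel. AE y in lborel. P (r, t, z, y)"
      proof (rule eventually_mono[OF H[of r t]])
        fix z assume c: "\<forall>pR. countable {pS. \<not> P (r,t,z,pR,pS)}"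
        have m3: "Measurable.pred borel (\<lambda>y. P (r,t,z,y))" using pred_Pair[OF m2, of z] by simp
        show "AE y in lborel. P (r, t, z, y)"
        proof (rule AE_lborel_pair[OF m3], rule AE_I2)
          fix pR show "AE pS in lborel. P (r,t,z,pR,pS)"
            by (rule AE_countable) (use c in auto)
        qed
      qed
    qed
  qed
qed

lemma quartic_finite:
  fixes a0 a1 a2 a3 a4 :: real
  assumes "a4 \<noteq> 0"
  shows "finite {x. a0 + a1*x + a2*x^2 + a3*x^3 + a4*x^4 = 0}"
proof -
  let ?p = "[:a0, a1, a2, a3, a4:]"
  have "?p \<noteq> 0" using assms by simp
  then have "finite {x. poly ?p x = 0}" by (rule poly_roots_finite)
  moreover have peq: "poly ?p x = a0 + a1*x + a2*x^2 + a3*x^3 + a4*x^4" for x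
    by (simp add: algebra_simps power2_eq_square power3_eq_cube power4_eq_xxxx)
  moreover have "{x. poly ?p x = 0} = {x. a0 + a1*x + a2*x^2 + a3*x^3 + a4*x^4 = 0}"
    by (simp only: peq)
  ultimately show ?thesis by simp
qed


lemma pred_prod5:
  assumes "Measurable.pred (borel \<Otimes>\<^sub>M borel \<Otimes>\<^sub>M borel \<Otimes>\<^sub>M borel \<Otimes>\<^sub>M borel) (P :: st \<Rightarrow> bool)"
  shows "Measurable.pred borel P"
  using assms by (simp add: borel_prod)

definition det3 :: "real \<Rightarrow> real \<Rightarrow> real \<Rightarrow> real \<Rightarrow> real \<Rightarrow> real \<Rightarrow> real \<Rightarrow> real \<Rightarrow> real \<Rightarrow> real" where
  "det3 a b c d e f g h i = a*(e*i - f*h) - b*(d*i - f*g) + c*(d*h - e*g)"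

definition cpR :: "st \<Rightarrow> real" where "cpR g = fst (snd (snd (snd g)))"
definition cpS :: "st \<Rightarrow> real" where "cpS g = snd (snd (snd (snd g)))"

lemma cramer3:
  fixes x0 x1 x2 a b c d e f g h i :: real
  assumes e1: "x0*a + x1*d + x2*g = 0" and e2: "x0*b + x1*e + x2*h = 0" and e3: "x0*c + x1*f + x2*i = 0"
    and dn: "det3 a b c d e f g h i \<noteq> 0"
  shows "x0 = 0 \<and> x1 = 0 \<and> x2 = 0"
proof -
  have "x0 * det3 a b c d e f g h i = (x0*a + x1*d + x2*g)*(e*i - f*h) - (x0*b + x1*e + x2*h)*(d*i - f*g) + (x0*c + x1*f + x2*i)*(d*h - e*g)"
    unfolding det3_def by algebra
  then have "x0 * det3 a b c d e f g h i = 0" using e1 e2 e3 by simp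
  moreover have "x1 * det3 a b c d e f g h i = - ((x0*a + x1*d + x2*g)*(b*i - c*h)) + (x0*b + x1*e + x2*h)*(a*i - c*g) - (x0*c + x1*f + x2*i)*(a*h - b*g)"
    unfolding det3_def by algebra
  then have "x1 * det3 a b c d e f g h i = 0" using e1 e2 e3 by simp
  moreover have "x2 * det3 a b c d e f g h i = (x0*a + x1*d + x2*g)*(b*f - c*e) - (x0*b + x1*e + x2*h)*(a*f - c*d) + (x0*c + x1*f + x2*i)*(a*e - b*d)"
    unfolding det3_def by algebra
  then have "x2 * det3 a b c d e f g h i = 0" using e1 e2 e3 by simp
  ultimately show ?thesis using dn by simp
qed

lemma indep_from_det:
  assumes d1: "(f1 has_derivative (\<lambda>h. dot g1 h)) (at x)"
    and d2: "(f2 has_derivative (\<lambda>h. dot g2 h)) (at x)"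
    and d3: "(f3 has_derivative (\<lambda>h. dot g3 h)) (at x)"
    and dn: "det3 (fst g1) (cpR g1) (cpS g1) (fst g2) (cpR g2) (cpS g2) (fst g3) (cpR g3) (cpS g3) \<noteq> 0"
  shows "func_indep_at [f1, f2, f3] x"
proof -
  have fd1: "frechet_derivative f1 (at x) = (\<lambda>h. dot g1 h)" using frechet_derivative_at[OF d1] by simp
  have fd2: "frechet_derivative f2 (at x) = (\<lambda>h. dot g2 h)" using frechet_derivative_at[OF d2] by simp
  have fd3: "frechet_derivative f3 (at x) = (\<lambda>h. dot g3 h)" using frechet_derivative_at[OF d3] by simp
  show ?thesis unfolding func_indep_at_def
  proof (intro conjI allI impI)
    show "\<forall>f\<in>set [f1, f2, f3]. f differentiable at x" using d1 d2 d3 by (auto simp: differentiable_def)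
    fix cf :: "nat \<Rightarrow> real" and j
    assume H: "\<forall>v. (\<Sum>i<length [f1, f2, f3]. cf i * frechet_derivative ([f1, f2, f3] ! i) (at x) v) = 0"
      and j: "j < length [f1, f2, f3]"
    have sm: "(\<Sum>i<length [f1, f2, f3]. cf i * frechet_derivative ([f1, f2, f3] ! i) (at x) v) = cf 0 * dot g1 v + cf 1 * dot g2 v + cf 2 * dot g3 v" for v
      by (simp add: fd1 fd2 fd3 eval_nat_numeral)
    have H': "cf 0 * dot g1 v + cf 1 * dot g2 v + cf 2 * dot g3 v = 0" for v using H sm by metis
    have e1: "cf 0 * fst g1 + cf 1 * fst g2 + cf 2 * fst g3 = 0" using H'[of "(1,0,0,0,0)"] by (simp add: dot_def)
    have e2: "cf 0 * cpR g1 + cf 1 * cpR g2 + cf 2 * cpR g3 = 0" using H'[of "(0,0,0,1,0)"] by (simp add: dot_def cpR_def)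
    have e3: "cf 0 * cpS g1 + cf 1 * cpS g2 + cf 2 * cpS g3 = 0" using H'[of "(0,0,0,0,1)"] by (simp add: dot_def cpS_def)
    have "cf 0 = 0 \<and> cf 1 = 0 \<and> cf 2 = 0" by (rule cramer3[OF e1 e2 e3 dn])
    then show "cf j = 0" using j by (auto simp: less_Suc_eq eval_nat_numeral)
  qed
qed
definition cHF1F2_0 :: "real \<Rightarrow> real \<Rightarrow> real \<Rightarrow> real \<Rightarrow> real \<Rightarrow> real" where
  "cHF1F2_0 k r t z pR = (2 * r^2 * pR^2 * k * (uu r z) * sin (2*t)^2 + 2 * r^2 * pR^2 * k * (uu r z) * cos (2*t)^2 - 32 * r^2 * z^2 * pR^2 * k * (uu r z)^3 * sin (2*t)^2 - 32 * r^2 * z^2 * pR^2 * k * (uu r z)^3 * cos (2*t)^2 - 2 * r^6 * pR^2 * k * (uu r z)^3 * sin (2*t)^2 - 2 * r^6 * pR^2 * k * (uu r z)^3 * cos (2*t)^2)"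
definition cHF1F2_1 :: "real \<Rightarrow> real \<Rightarrow> real \<Rightarrow> real \<Rightarrow> real \<Rightarrow> real" where
  "cHF1F2_1 k r t z pR = (16 * z * pR * k * (uu r z) * sin (2*t)^2 / (r) + 16 * z * pR * k * (uu r z) * cos (2*t)^2 / (r) - 8 * z * pR^3 * sin (2*t)^2 / (r) - 8 * z * pR^3 * cos (2*t)^2 / (r))"
definition cHF1F2_2 :: "real \<Rightarrow> real \<Rightarrow> real \<Rightarrow> real \<Rightarrow> real \<Rightarrow> real" where
  "cHF1F2_2 k r t z pR = (- (2 * k * (uu r z) * sin (2*t)^2) - 2 * k * (uu r z) * cos (2*t)^2 + 2 * pR^2 * sin (2*t)^2 + 2 * pR^2 * cos (2*t)^2 - 32 * z^2 * k * (uu r z)^3 * sin (2*t)^2 - 32 * z^2 * k * (uu r z)^3 * cos (2*t)^2 - 2 * r^4 * k * (uu r z)^3 * sin (2*t)^2 - 2 * r^4 * k * (uu r z)^3 * cos (2*t)^2)"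
definition cHF1F2_3 :: "real \<Rightarrow> real \<Rightarrow> real \<Rightarrow> real \<Rightarrow> real \<Rightarrow> real" where
  "cHF1F2_3 k r t z pR = (- (8 * z * pR * sin (2*t)^2 / (r^3)) - 8 * z * pR * cos (2*t)^2 / (r^3))"
definition cHF1F2_4 :: "real \<Rightarrow> real \<Rightarrow> real \<Rightarrow> real \<Rightarrow> real \<Rightarrow> real" where
  "cHF1F2_4 k r t z pR = (2 * sin (2*t)^2 / (r^2) + 2 * cos (2*t)^2 / (r^2))"

lemma HzHF1F2: "AE z in lborel. r > 0 \<longrightarrow> (\<forall>pR. cHF1F2_4 k r t z pR \<noteq> 0)"
proof (rule AE_I2, intro impI allI)
  fix z pR assume r: "(r::real) > 0"
  obtain s c where sc: "sin (2*t) = s" "cos (2*t) = c" by blast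
  have cs: "s^2 + c^2 = 1" using sc sin_cos_squared_add[of "2*t"] by simp
  have "cHF1F2_4 k r t z pR * r^2 = 2 * (s^2 + c^2)" using r unfolding cHF1F2_4_def sc by (simp add: field_simps)
  then have "cHF1F2_4 k r t z pR * r^2 = 2" using cs by simp
  then show "cHF1F2_4 k r t z pR \<noteq> 0" by auto
qed

definition PHF1F2 :: "real \<Rightarrow> st \<Rightarrow> real" where
  "PHF1F2 k x = cHF1F2_0 k (fst x) (fst (snd x)) (fst (snd (snd x))) (fst (snd (snd (snd x)))) + cHF1F2_1 k (fst x) (fst (snd x)) (fst (snd (snd x))) (fst (snd (snd (snd x)))) * (snd (snd (snd (snd x)))) + cHF1F2_2 k (fst x) (fst (snd x)) (fst (snd (snd x))) (fst (snd (snd (snd x)))) * (snd (snd (snd (snd x))))^2 + cHF1F2_3 k (fst x) (fst (snd x)) (fst (snd (snd x))) (fst (snd (snd (snd x)))) * (snd (snd (snd (snd x))))^3 + cHF1F2_4 k (fst x) (fst (snd x)) (fst (snd (snd x))) (fst (snd (snd (snd x)))) * (snd (snd (snd (snd x))))^4"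

definition goodHF1F2 :: "real \<Rightarrow> st \<Rightarrow> bool" where
  "goodHF1F2 k x \<longleftrightarrow> (fst x > 0 \<longrightarrow> PHF1F2 k x \<noteq> 0)"

lemma measHF1F2: "Measurable.pred borel (goodHF1F2 k)"
  unfolding goodHF1F2_def PHF1F2_def cHF1F2_0_def cHF1F2_1_def cHF1F2_2_def cHF1F2_3_def cHF1F2_4_def uu_def by (rule pred_prod5) measurable

lemma detHF1F2: assumes "r > 0"
  shows "det3 (fst (gH k (r,t,z,pR,pS))) (cpR (gH k (r,t,z,pR,pS))) (cpS (gH k (r,t,z,pR,pS))) (fst (gF1 k (r,t,z,pR,pS))) (cpR (gF1 k (r,t,z,pR,pS))) (cpS (gF1 k (r,t,z,pR,pS))) (fst (gF2 k (r,t,z,pR,pS))) (cpR (gF2 k (r,t,z,pR,pS))) (cpS (gF2 k (r,t,z,pR,pS))) = cHF1F2_0 k r t z pR + cHF1F2_1 k r t z pR * pS + cHF1F2_2 k r t z pR * pS^2 + cHF1F2_3 k r t z pR * pS^3 + cHF1F2_4 k r t z pR * pS^4"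
proof -
  have rne: "r \<noteq> 0" using assms by simp
  obtain ir where ir: "inverse r = ir" by blast
  have rir: "r * ir = 1" using ir rne by auto
  have d1: "\<And>a::real. a / r = a * ir" using ir by (simp add: divide_inverse)
  have d2: "\<And>(a::real) n. a / r ^ n = a * ir ^ n" unfolding ir[symmetric] by (metis divide_inverse power_inverse)
  have d3: "\<And>a::real. a / (r^4 + 16*z^2) powr (3/2) = a * (uu r z)^3" using powr32u[OF assms] by simp
  obtain cc ss where cs: "cos (2*t) = cc" "sin (2*t) = ss" by blast
  have cs1: "cc^2 + ss^2 = 1" using cs sin_cos_squared_add[of "2*t"] by simp
  have d4: "\<And>a::real. a / sqrt (r^4 + 16*z^2) = a * uu r z" by (simp add: uu_def)
  have "det3 (fst (gH k (r,t,z,pR,pS))) (cpR (gH k (r,t,z,pR,pS))) (cpS (gH k (r,t,z,pR,pS))) (fst (gF1 k (r,t,z,pR,pS))) (cpR (gF1 k (r,t,z,pR,pS))) (cpS (gF1 k (r,t,z,pR,pS))) (fst (gF2 k (r,t,z,pR,pS))) (cpR (gF2 k (r,t,z,pR,pS))) (cpS (gF2 k (r,t,z,pR,pS))) - (cHF1F2_0 k r t z pR + cHF1F2_1 k r t z pR * pS + cHF1F2_2 k r t z pR * pS^2 + cHF1F2_3 k r t z pR * pS^3 + cHF1F2_4 k r t z pR * pS^4) = (r*ir - 1) * (- (2 * pS^2 * k * (uu r z) * ss^2) - 2 * pS^2 * k * (uu r z) * cc^2 + 2 * pS^4 * ss^2 * ir^2 + 2 * pS^4 * cc^2 * ir^2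 + 16 * z * pR * pS * k * (uu r z) * ss^2 * ir + 16 * z * pR * pS * k * (uu r z) * cc^2 * ir + 4 * z * pR * pS^3 * ss^2 * ir^3 + 4 * z * pR * pS^3 * cc^2 * ir^3 - 4 * z * pR^3 * pS * ss^2 * ir - 4 * z * pR^3 * pS * cc^2 * ir - 32 * z^2 * pS^2 * k * (uu r z)^3 * ss^2 - 32 * z^2 * pS^2 * k * (uu r z)^3 * cc^2 - 2 * r * pS^2 * k * (uu r z) * ss^2 * ir - 2 * r * pS^2 * k * (uu r z) * cc^2 * ir - 32 * r * z^2 * pS^2 * k * (uu r z)^3 * ss^2 * ir - 32 * r * z^2 * pS^2 * k * (uu r z)^3 * cc^2 * ir - 32 * r^2 * z^2 * pS^2 * k * (uu r z)^3 * ss^2 * ir^2 - 32 * r^2 * z^2 * pS^2 * k * (uu r z)^3 * cc^2 * ir^2 - 32 * r^2 * z^2 * pR^2 * k * (uu r z)^3 * ss^2 - 32 * r^2 * z^2 * pR^2 * k * (uu r z)^3 * cc^2 - 16 * r^3 * z * pR * pS * k * (uu r z)^3 * ss^2 - 16 * r^3 * z * pR * pS * k * (uu r z)^3 * cc^2 + 2 * r^4 * pS^2 * k * (uu r z)^3 * ss^2 + 2 * r^4 * pS^2 * k * (uu r z)^3 * cc^2 - 16 * r^4 * z * pR * pS * k * (uu r z)^3 * ss^2 * ir - 16 * r^4 * z * pR * pS * k * (uu r z)^3 * cc^2 * ir + 2 * r^5 * pS^2 * k * (uu r z)^3 * ss^2 * ir + 2 * r^5 * pS^2 * k * (uu r z)^3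 * cc^2 * ir)"
    apply (simp add: det3_def cpR_def cpS_def gH_def gF1_def gF2_def Let_def cHF1F2_0_def cHF1F2_1_def cHF1F2_2_def cHF1F2_3_def cHF1F2_4_def d1 d2 d4 cs)
    apply algebra
    done
  then show ?thesis using rir by simp
qed

lemma finiteHF1F2: assumes "r > 0" "cHF1F2_4 k r t z pR \<noteq> 0"
  shows "countable {pS. \<not> goodHF1F2 k (r,t,z,pR,pS)}"
proof -
  have "finite {pS. cHF1F2_0 k r t z pR + cHF1F2_1 k r t z pR * pS + cHF1F2_2 k r t z pR * pS^2 + cHF1F2_3 k r t z pR * pS^3 + cHF1F2_4 k r t z pR * pS^4 = 0}"
    using assms(2) by (rule quartic_finite)
  moreover have "{pS. \<not> goodHF1F2 k (r,t,z,pR,pS)} \<subseteq> {pS. cHF1F2_0 k r t z pR + cHF1F2_1 k r t z pR * pS + cHF1F2_2 k r t z pR * pS^2 + cHF1F2_3 k r t z pR * pS^3 + cHF1F2_4 k r t z pR * pS^4 = 0}"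
    by (auto simp: goodHF1F2_def PHF1F2_def)
  ultimately show ?thesis by (meson countable_finite finite_subset)
qed

lemma indepHF1F2:
  shows "func_indep_ae [Ham k, F1 k, F2 k]"
  unfolding func_indep_ae_def
proof (rule eventually_mono[OF AE_st[OF measHF1F2]])
  fix r t
  show "AE z in lborel. \<forall>pR. countable {pS. \<not> goodHF1F2 k (r,t,z,pR,pS)}"
  proof (rule eventually_mono[OF HzHF1F2[where r=r and t=t and k=k]])
    fix z assume h: "r > 0 \<longrightarrow> (\<forall>pR. cHF1F2_4 k r t z pR \<noteq> 0)"
    show "\<forall>pR. countable {pS. \<not> goodHF1F2 k (r,t,z,pR,pS)}"
    proof
      fix pR show "countable {pS. \<not> goodHF1F2 k (r,t,z,pR,pS)}"
      proof (cases "r > 0")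
        case True then show ?thesis using h finiteHF1F2 by blast
      next
        case False then have "{pS. \<not> goodHF1F2 k (r,t,z,pR,pS)} = {}" by (auto simp: goodHF1F2_def)
        then show ?thesis by simp
      qed
    qed
  qed
next
  fix x assume g: "goodHF1F2 k x"
  show "in_dom x \<longrightarrow> func_indep_at [Ham k, F1 k, F2 k] x"
  proof
    assume "in_dom x"
    obtain r t z pR pS where x: "x = (r,t,z,pR,pS)" by (cases x) auto
    have r: "r > 0" using \<open>in_dom x\<close> x by (simp add: in_dom_def)
    have "det3 (fst (gH k (r,t,z,pR,pS))) (cpR (gH k (r,t,z,pR,pS))) (cpS (gH k (r,t,z,pR,pS))) (fst (gF1 k (r,t,z,pR,pS))) (cpR (gF1 k (r,t,z,pR,pS))) (cpS (gF1 k (r,t,z,pR,pS))) (fst (gF2 k (r,t,z,pR,pS))) (cpR (gF2 k (r,t,z,pR,pS))) (cpS (gF2 k (r,t,z,pR,pS))) \<noteq> 0"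
      using g r x detHF1F2[OF r] by (simp add: goodHF1F2_def PHF1F2_def)
    then show "func_indep_at [Ham k, F1 k, F2 k] x"
      unfolding x by (rule indep_from_det[OF deriv_H[OF r] deriv_F1[OF r] deriv_F2[OF r]])
  qed
qed
definition cHF1F3_0 :: "real \<Rightarrow> real \<Rightarrow> real \<Rightarrow> real \<Rightarrow> real \<Rightarrow> real" where
  "cHF1F3_0 k r t z pR = (8 * r^2 * z * pR^2 * k * (uu r z) * sin (2*t) - 128 * r^2 * z^3 * pR^2 * k * (uu r z)^3 * sin (2*t) - 8 * r^6 * z * pR^2 * k * (uu r z)^3 * sin (2*t))"
definition cHF1F3_1 :: "real \<Rightarrow> real \<Rightarrow> real \<Rightarrow> real \<Rightarrow> real \<Rightarrow> real" where
  "cHF1F3_1 k r t z pR = (- (32 * z^2 * pR^3 * sin (2*t) / (r)) - 256 * r * z^3 * pR * k * (uu r z)^3 * cos (2*t) - 4 * r^3 * pR * k * (uu r z) * sin (2*t) + 64 * r^3 * z^2 * pR * k * (uu r z)^3 * sin (2*t) - 16 * r^5 * z * pR * k * (uu r z)^3 * cos (2*t) + 4 * r^7 * pR * k * (uu r z)^3 * sin (2*t))"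
definition cHF1F3_2 :: "real \<Rightarrow> real \<Rightarrow> real \<Rightarrow> real \<Rightarrow> real \<Rightarrow> real" where
  "cHF1F3_2 k r t z pR = (- (64 * z^2 * pR^2 * cos (2*t) / (r^2)) - 8 * z * k * (uu r z) * sin (2*t) + 24 * z * pR^2 * sin (2*t) + 128 * z^3 * k * (uu r z)^3 * sin (2*t) + 64 * r^2 * z^2 * k * (uu r z)^3 * cos (2*t) + 8 * r^4 * z * k * (uu r z)^3 * sin (2*t) + 4 * r^6 * k * (uu r z)^3 * cos (2*t))"
definition cHF1F3_3 :: "real \<Rightarrow> real \<Rightarrow> real \<Rightarrow> real \<Rightarrow> real \<Rightarrow> real" where
  "cHF1F3_3 k r t z pR = (32 * z^2 * pR * sin (2*t) / (r^3) + 32 * z * pR * cos (2*t) / (r) - 4 * r * pR * sin (2*t))"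
definition cHF1F3_4 :: "real \<Rightarrow> real \<Rightarrow> real \<Rightarrow> real \<Rightarrow> real \<Rightarrow> real" where
  "cHF1F3_4 k r t z pR = (- (8 * z * sin (2*t) / (r^2)) - 4 * cos (2*t))"

lemma HzHF1F3: "AE z in lborel. r > 0 \<longrightarrow> (\<forall>pR. cHF1F3_4 k r t z pR \<noteq> 0)"
proof (rule AE_countable)
  obtain s c where sc: "sin (2*t) = s" "cos (2*t) = c" by blast
  have cs: "s^2 + c^2 = 1" using sc sin_cos_squared_add[of "2*t"] by simp
  have "{z. \<not> (r > 0 \<longrightarrow> (\<forall>pR. cHF1F3_4 k r t z pR \<noteq> 0))} \<subseteq> {- (c * r^2) / (2 * s)}"
  proof
    fix z assume "z \<in> {z. \<not> (r > 0 \<longrightarrow> (\<forall>pR. cHF1F3_4 k r t z pR \<noteq> 0))}"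
    then have r: "r > 0" and e: "- (8 * z * s / (r^2)) - 4 * c = 0"
      by (auto simp: cHF1F3_4_def sc)
    have "(- (8 * z * s / (r^2)) - 4 * c) * r^2 = 0" using e by simp
    then have e': "2 * z * s = - (c * r^2)" using r by (simp add: algebra_simps)
    have nz: "s \<noteq> 0"
    proof
      assume "s = 0"
      then have "c = 0" using e' r by simp
      then show False using \<open>s = 0\<close> cs by simp
    qed
    from e' nz have "z = - (c * r^2) / (2 * s)" by (simp add: field_simps)
    then show "z \<in> {- (c * r^2) / (2 * s)}" by simp
  qed
  then show "countable {z. \<not> (r > 0 \<longrightarrow> (\<forall>pR. cHF1F3_4 k r t z pR \<noteq> 0))}"
    by (rule countable_subset) simp
qed

definition PHF1F3 :: "real \<Rightarrow> st \<Rightarrow> real" where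
  "PHF1F3 k x = cHF1F3_0 k (fst x) (fst (snd x)) (fst (snd (snd x))) (fst (snd (snd (snd x)))) + cHF1F3_1 k (fst x) (fst (snd x)) (fst (snd (snd x))) (fst (snd (snd (snd x)))) * (snd (snd (snd (snd x)))) + cHF1F3_2 k (fst x) (fst (snd x)) (fst (snd (snd x))) (fst (snd (snd (snd x)))) * (snd (snd (snd (snd x))))^2 + cHF1F3_3 k (fst x) (fst (snd x)) (fst (snd (snd x))) (fst (snd (snd (snd x)))) * (snd (snd (snd (snd x))))^3 + cHF1F3_4 k (fst x) (fst (snd x)) (fst (snd (snd x))) (fst (snd (snd (snd x)))) * (snd (snd (snd (snd x))))^4"

definition goodHF1F3 :: "real \<Rightarrow> st \<Rightarrow> bool" where
  "goodHF1F3 k x \<longleftrightarrow> (fst x > 0 \<longrightarrow> PHF1F3 k x \<noteq> 0)"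

lemma measHF1F3: "Measurable.pred borel (goodHF1F3 k)"
  unfolding goodHF1F3_def PHF1F3_def cHF1F3_0_def cHF1F3_1_def cHF1F3_2_def cHF1F3_3_def cHF1F3_4_def uu_def by (rule pred_prod5) measurable

lemma detHF1F3: assumes "r > 0"
  shows "det3 (fst (gH k (r,t,z,pR,pS))) (cpR (gH k (r,t,z,pR,pS))) (cpS (gH k (r,t,z,pR,pS))) (fst (gF1 k (r,t,z,pR,pS))) (cpR (gF1 k (r,t,z,pR,pS))) (cpS (gF1 k (r,t,z,pR,pS))) (fst (gF3 k (r,t,z,pR,pS))) (cpR (gF3 k (r,t,z,pR,pS))) (cpS (gF3 k (r,t,z,pR,pS))) = cHF1F3_0 k r t z pR + cHF1F3_1 k r t z pR * pS + cHF1F3_2 k r t z pR * pS^2 + cHF1F3_3 k r t z pR * pS^3 + cHF1F3_4 k r t z pR * pS^4"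
proof -
  have rne: "r \<noteq> 0" using assms by simp
  obtain ir where ir: "inverse r = ir" by blast
  have rir: "r * ir = 1" using ir rne by auto
  have d1: "\<And>a::real. a / r = a * ir" using ir by (simp add: divide_inverse)
  have d2: "\<And>(a::real) n. a / r ^ n = a * ir ^ n" unfolding ir[symmetric] by (metis divide_inverse power_inverse)
  have d3: "\<And>a::real. a / (r^4 + 16*z^2) powr (3/2) = a * (uu r z)^3" using powr32u[OF assms] by simp
  obtain cc ss where cs: "cos (2*t) = cc" "sin (2*t) = ss" by blast
  have cs1: "cc^2 + ss^2 = 1" using cs sin_cos_squared_add[of "2*t"] by simp
  have d4: "\<And>a::real. a / sqrt (r^4 + 16*z^2) = a * uu r z" by (simp add: uu_def)
  have "det3 (fst (gH k (r,t,z,pR,pS))) (cpR (gH k (r,t,z,pR,pS))) (cpS (gH k (r,t,z,pR,pS))) (fst (gF1 k (r,t,z,pR,pS))) (cpR (gF1 k (r,t,z,pR,pS))) (cpS (gF1 k (r,t,z,pR,pS))) (fst (gF3 k (r,t,z,pR,pS))) (cpR (gF3 k (r,t,z,pR,pS))) (cpS (gF3 k (r,t,z,pR,pS))) - (cHF1F3_0 k r t z pR + cHF1F3_1 k r t z pR * pS + cHF1F3_2 k r t z pR * pS^2 + cHF1F3_3 k r t z pR * pS^3 + cHF1F3_4 k r t z pR * pS^4) = (r*ir - 1) * (- (4 * pS^4 * cc) - 8 * z * pS^2 * k * (uu r z) * ss - 8 * z * pS^4 * ss * ir^2 + 32 * z * pR * pS^3 * cc * ir + 16 * z * pR^2 *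 pS^2 * ss + 16 * z^2 * pR * pS^3 * ss * ir^3 - 32 * z^2 * pR^2 * pS^2 * cc * ir^2 - 16 * z^2 * pR^3 * pS * ss * ir + 128 * z^3 * pS^2 * k * (uu r z)^3 * ss - 4 * r * pS^4 * cc * ir - 8 * r * z * pS^2 * k * (uu r z) * ss * ir - 8 * r * z * pS^4 * ss * ir^3 + 16 * r * z * pR * pS^3 * cc * ir^2 + 8 * r * z * pR^2 * pS^2 * ss * ir + 128 * r * z^3 * pS^2 * k * (uu r z)^3 * ss * ir - 256 * r * z^3 * pR * pS * k * (uu r z)^3 * cc - 2 * r^2 * pS^4 * cc * ir^2 + 64 * r^2 * z^2 * pS^2 * k * (uu r z)^3 * cc + 128 * r^2 * z^3 * pS^2 * k * (uu r z)^3 * ss * ir^2 - 256 * r^2 * z^3 * pR * pS * k * (uu r z)^3 * cc * ir - 128 * r^2 * z^3 * pR^2 * k * (uu r z)^3 * ss + 64 * r^3 * z^2 * pS^2 * k * (uu r z)^3 * cc * ir + 24 * r^4 * z * pS^2 * k * (uu r z)^3 * ss + 8 * r^5 * z * pS^2 * k * (uu r z)^3 * ss * ir)"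
    apply (simp add: det3_def cpR_def cpS_def gH_def gF1_def gF3_def Let_def cHF1F3_0_def cHF1F3_1_def cHF1F3_2_def cHF1F3_3_def cHF1F3_4_def d1 d2 d4 cs)
    apply algebra
    done
  then show ?thesis using rir by simp
qed

lemma finiteHF1F3: assumes "r > 0" "cHF1F3_4 k r t z pR \<noteq> 0"
  shows "countable {pS. \<not> goodHF1F3 k (r,t,z,pR,pS)}"
proof -
  have "finite {pS. cHF1F3_0 k r t z pR + cHF1F3_1 k r t z pR * pS + cHF1F3_2 k r t z pR * pS^2 + cHF1F3_3 k r t z pR * pS^3 + cHF1F3_4 k r t z pR * pS^4 = 0}"
    using assms(2) by (rule quartic_finite)
  moreover have "{pS. \<not> goodHF1F3 k (r,t,z,pR,pS)} \<subseteq> {pS. cHF1F3_0 k r t z pR + cHF1F3_1 k r t z pR * pS + cHF1F3_2 k r t z pR * pS^2 + cHF1F3_3 k r t z pR * pS^3 + cHF1F3_4 k r t z pR * pS^4 = 0}"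
    by (auto simp: goodHF1F3_def PHF1F3_def)
  ultimately show ?thesis by (meson countable_finite finite_subset)
qed

lemma indepHF1F3:
  shows "func_indep_ae [Ham k, F1 k, F3 k]"
  unfolding func_indep_ae_def
proof (rule eventually_mono[OF AE_st[OF measHF1F3]])
  fix r t
  show "AE z in lborel. \<forall>pR. countable {pS. \<not> goodHF1F3 k (r,t,z,pR,pS)}"
  proof (rule eventually_mono[OF HzHF1F3[where r=r and t=t and k=k]])
    fix z assume h: "r > 0 \<longrightarrow> (\<forall>pR. cHF1F3_4 k r t z pR \<noteq> 0)"
    show "\<forall>pR. countable {pS. \<not> goodHF1F3 k (r,t,z,pR,pS)}"
    proof
      fix pR show "countable {pS. \<not> goodHF1F3 k (r,t,z,pR,pS)}"
      proof (cases "r > 0")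
        case True then show ?thesis using h finiteHF1F3 by blast
      next
        case False then have "{pS. \<not> goodHF1F3 k (r,t,z,pR,pS)} = {}" by (auto simp: goodHF1F3_def)
        then show ?thesis by simp
      qed
    qed
  qed
next
  fix x assume g: "goodHF1F3 k x"
  show "in_dom x \<longrightarrow> func_indep_at [Ham k, F1 k, F3 k] x"
  proof
    assume "in_dom x"
    obtain r t z pR pS where x: "x = (r,t,z,pR,pS)" by (cases x) auto
    have r: "r > 0" using \<open>in_dom x\<close> x by (simp add: in_dom_def)
    have "det3 (fst (gH k (r,t,z,pR,pS))) (cpR (gH k (r,t,z,pR,pS))) (cpS (gH k (r,t,z,pR,pS))) (fst (gF1 k (r,t,z,pR,pS))) (cpR (gF1 k (r,t,z,pR,pS))) (cpS (gF1 k (r,t,z,pR,pS))) (fst (gF3 k (r,t,z,pR,pS))) (cpR (gF3 k (r,t,z,pR,pS))) (cpS (gF3 k (r,t,z,pR,pS))) \<noteq> 0"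
      using g r x detHF1F3[OF r] by (simp add: goodHF1F3_def PHF1F3_def)
    then show "func_indep_at [Ham k, F1 k, F3 k] x"
      unfolding x by (rule indep_from_det[OF deriv_H[OF r] deriv_F1[OF r] deriv_F3[OF r]])
  qed
qed
definition cHF2F3_0 :: "real \<Rightarrow> real \<Rightarrow> real \<Rightarrow> real \<Rightarrow> real \<Rightarrow> real" where
  "cHF2F3_0 k r t z pR = (8 * r^2 * z * pR^2 * k * (uu r z) * cos (2*t) - 128 * r^2 * z^3 * pR^2 * k * (uu r z)^3 * cos (2*t) - 8 * r^6 * z * pR^2 * k * (uu r z)^3 * cos (2*t))"
definition cHF2F3_1 :: "real \<Rightarrow> real \<Rightarrow> real \<Rightarrow> real \<Rightarrow> real \<Rightarrow> real" where
  "cHF2F3_1 k r t z pR = (- (32 * z^2 * pR^3 * cos (2*t) / (r)) + 256 * r * z^3 * pR * k * (uu r z)^3 * sin (2*t) - 4 * r^3 * pR * k * (uu r z) * cos (2*t) + 64 * r^3 * z^2 * pR * k * (uu r z)^3 * cos (2*t) + 16 * r^5 * z * pR * k * (uu r z)^3 * sin (2*t) + 4 * r^7 * pR * k * (uu r z)^3 * cos (2*t))"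
definition cHF2F3_2 :: "real \<Rightarrow> real \<Rightarrow> real \<Rightarrow> real \<Rightarrow> real \<Rightarrow> real" where
  "cHF2F3_2 k r t z pR = (64 * z^2 * pR^2 * sin (2*t) / (r^2) - 8 * z * k * (uu r z) * cos (2*t) + 24 * z * pR^2 * cos (2*t) + 128 * z^3 * k * (uu r z)^3 * cos (2*t) - 64 * r^2 * z^2 * k * (uu r z)^3 * sin (2*t) + 8 * r^4 * z * k * (uu r z)^3 * cos (2*t) - 4 * r^6 * k * (uu r z)^3 * sin (2*t))"
definition cHF2F3_3 :: "real \<Rightarrow> real \<Rightarrow> real \<Rightarrow> real \<Rightarrow> real \<Rightarrow> real" where
  "cHF2F3_3 k r t z pR = (32 * z^2 * pR * cos (2*t) / (r^3) - 32 * z * pR * sin (2*t) / (r) - 4 * r * pR * cos (2*t))"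
definition cHF2F3_4 :: "real \<Rightarrow> real \<Rightarrow> real \<Rightarrow> real \<Rightarrow> real \<Rightarrow> real" where
  "cHF2F3_4 k r t z pR = (- (8 * z * cos (2*t) / (r^2)) + 4 * sin (2*t))"

lemma HzHF2F3: "AE z in lborel. r > 0 \<longrightarrow> (\<forall>pR. cHF2F3_4 k r t z pR \<noteq> 0)"
proof (rule AE_countable)
  obtain s c where sc: "sin (2*t) = s" "cos (2*t) = c" by blast
  have cs: "s^2 + c^2 = 1" using sc sin_cos_squared_add[of "2*t"] by simp
  have "{z. \<not> (r > 0 \<longrightarrow> (\<forall>pR. cHF2F3_4 k r t z pR \<noteq> 0))} \<subseteq> {(s * r^2) / (2 * c)}"
  proof
    fix z assume "z \<in> {z. \<not> (r > 0 \<longrightarrow> (\<forall>pR. cHF2F3_4 k r t z pR \<noteq> 0))}"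
    then have r: "r > 0" and e: "- (8 * z * c / (r^2)) + 4 * s = 0"
      by (auto simp: cHF2F3_4_def sc)
    have "(- (8 * z * c / (r^2)) + 4 * s) * r^2 = 0" using e by simp
    then have e': "2 * z * c = s * r^2" using r by (simp add: algebra_simps)
    have nz: "c \<noteq> 0"
    proof
      assume "c = 0"
      then have "s = 0" using e' r by simp
      then show False using \<open>c = 0\<close> cs by simp
    qed
    from e' nz have "z = (s * r^2) / (2 * c)" by (simp add: field_simps)
    then show "z \<in> {(s * r^2) / (2 * c)}" by simp
  qed
  then show "countable {z. \<not> (r > 0 \<longrightarrow> (\<forall>pR. cHF2F3_4 k r t z pR \<noteq> 0))}"
    by (rule countable_subset) simp
qed

definition PHF2F3 :: "real \<Rightarrow> st \<Rightarrow> real" where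
  "PHF2F3 k x = cHF2F3_0 k (fst x) (fst (snd x)) (fst (snd (snd x))) (fst (snd (snd (snd x)))) + cHF2F3_1 k (fst x) (fst (snd x)) (fst (snd (snd x))) (fst (snd (snd (snd x)))) * (snd (snd (snd (snd x)))) + cHF2F3_2 k (fst x) (fst (snd x)) (fst (snd (snd x))) (fst (snd (snd (snd x)))) * (snd (snd (snd (snd x))))^2 + cHF2F3_3 k (fst x) (fst (snd x)) (fst (snd (snd x))) (fst (snd (snd (snd x)))) * (snd (snd (snd (snd x))))^3 + cHF2F3_4 k (fst x) (fst (snd x)) (fst (snd (snd x))) (fst (snd (snd (snd x)))) * (snd (snd (snd (snd x))))^4"

definition goodHF2F3 :: "real \<Rightarrow> st \<Rightarrow> bool" where
  "goodHF2F3 k x \<longleftrightarrow> (fst x > 0 \<longrightarrow> PHF2F3 k x \<noteq> 0)"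

lemma measHF2F3: "Measurable.pred borel (goodHF2F3 k)"
  unfolding goodHF2F3_def PHF2F3_def cHF2F3_0_def cHF2F3_1_def cHF2F3_2_def cHF2F3_3_def cHF2F3_4_def uu_def by (rule pred_prod5) measurable

lemma detHF2F3: assumes "r > 0"
  shows "det3 (fst (gH k (r,t,z,pR,pS))) (cpR (gH k (r,t,z,pR,pS))) (cpS (gH k (r,t,z,pR,pS))) (fst (gF2 k (r,t,z,pR,pS))) (cpR (gF2 k (r,t,z,pR,pS))) (cpS (gF2 k (r,t,z,pR,pS))) (fst (gF3 k (r,t,z,pR,pS))) (cpR (gF3 k (r,t,z,pR,pS))) (cpS (gF3 k (r,t,z,pR,pS))) = cHF2F3_0 k r t z pR + cHF2F3_1 k r t z pR * pS + cHF2F3_2 k r t z pR * pS^2 + cHF2F3_3 k r t z pR * pS^3 + cHF2F3_4 k r t z pR * pS^4"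
proof -
  have rne: "r \<noteq> 0" using assms by simp
  obtain ir where ir: "inverse r = ir" by blast
  have rir: "r * ir = 1" using ir rne by auto
  have d1: "\<And>a::real. a / r = a * ir" using ir by (simp add: divide_inverse)
  have d2: "\<And>(a::real) n. a / r ^ n = a * ir ^ n" unfolding ir[symmetric] by (metis divide_inverse power_inverse)
  have d3: "\<And>a::real. a / (r^4 + 16*z^2) powr (3/2) = a * (uu r z)^3" using powr32u[OF assms] by simp
  obtain cc ss where cs: "cos (2*t) = cc" "sin (2*t) = ss" by blast
  have cs1: "cc^2 + ss^2 = 1" using cs sin_cos_squared_add[of "2*t"] by simp
  have d4: "\<And>a::real. a / sqrt (r^4 + 16*z^2) = a * uu r z" by (simp add: uu_def)
  have "det3 (fst (gH k (r,t,z,pR,pS))) (cpR (gH k (r,t,z,pR,pS))) (cpS (gH k (r,t,z,pR,pS))) (fst (gF2 k (r,t,z,pR,pS))) (cpR (gF2 k (r,t,z,pR,pS))) (cpS (gF2 k (r,t,z,pR,pS))) (fst (gF3 k (r,t,z,pR,pS))) (cpR (gF3 k (r,t,z,pR,pS))) (cpS (gF3 k (r,t,z,pR,pS))) - (cHF2F3_0 k r t z pR + cHF2F3_1 k r t z pR * pS + cHF2F3_2 k r t z pR * pS^2 + cHF2F3_3 k r t z pR * pS^3 + cHF2F3_4 k r t z pR * pS^4) = (r*ir - 1) * (4 * pS^4 * ss - 8 * z * pS^2 * k * (uu r z) * cc - 8 * z * pS^4 * cc * ir^2 - 32 * z * pR * pS^3 * ss * ir + 16 * z * pR^2 * pS^2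 * cc + 16 * z^2 * pR * pS^3 * cc * ir^3 + 32 * z^2 * pR^2 * pS^2 * ss * ir^2 - 16 * z^2 * pR^3 * pS * cc * ir + 128 * z^3 * pS^2 * k * (uu r z)^3 * cc + 4 * r * pS^4 * ss * ir - 8 * r * z * pS^2 * k * (uu r z) * cc * ir - 8 * r * z * pS^4 * cc * ir^3 - 16 * r * z * pR * pS^3 * ss * ir^2 + 8 * r * z * pR^2 * pS^2 * cc * ir + 128 * r * z^3 * pS^2 * k * (uu r z)^3 * cc * ir + 256 * r * z^3 * pR * pS * k * (uu r z)^3 * ss + 2 * r^2 * pS^4 * ss * ir^2 - 64 * r^2 * z^2 * pS^2 * k * (uu r z)^3 * ss + 128 * r^2 * z^3 * pS^2 * k * (uu r z)^3 * cc * ir^2 + 256 * r^2 * z^3 * pR * pS * k * (uu r z)^3 * ss * ir - 128 * r^2 * z^3 * pR^2 * k * (uu r z)^3 * cc - 64 * r^3 * z^2 * pS^2 * k * (uu r z)^3 * ss * ir + 24 * r^4 * z * pS^2 * k * (uu r z)^3 * cc + 8 * r^5 * z * pS^2 * k * (uu r z)^3 * cc * ir)"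
    apply (simp add: det3_def cpR_def cpS_def gH_def gF2_def gF3_def Let_def cHF2F3_0_def cHF2F3_1_def cHF2F3_2_def cHF2F3_3_def cHF2F3_4_def d1 d2 d4 cs)
    apply algebra
    done
  then show ?thesis using rir by simp
qed

lemma finiteHF2F3: assumes "r > 0" "cHF2F3_4 k r t z pR \<noteq> 0"
  shows "countable {pS. \<not> goodHF2F3 k (r,t,z,pR,pS)}"
proof -
  have "finite {pS. cHF2F3_0 k r t z pR + cHF2F3_1 k r t z pR * pS + cHF2F3_2 k r t z pR * pS^2 + cHF2F3_3 k r t z pR * pS^3 + cHF2F3_4 k r t z pR * pS^4 = 0}"
    using assms(2) by (rule quartic_finite)
  moreover have "{pS. \<not> goodHF2F3 k (r,t,z,pR,pS)} \<subseteq> {pS. cHF2F3_0 k r t z pR + cHF2F3_1 k r t z pR * pS + cHF2F3_2 k r t z pR * pS^2 + cHF2F3_3 k r t z pR * pS^3 + cHF2F3_4 k r t z pR * pS^4 = 0}"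
    by (auto simp: goodHF2F3_def PHF2F3_def)
  ultimately show ?thesis by (meson countable_finite finite_subset)
qed

lemma indepHF2F3:
  shows "func_indep_ae [Ham k, F2 k, F3 k]"
  unfolding func_indep_ae_def
proof (rule eventually_mono[OF AE_st[OF measHF2F3]])
  fix r t
  show "AE z in lborel. \<forall>pR. countable {pS. \<not> goodHF2F3 k (r,t,z,pR,pS)}"
  proof (rule eventually_mono[OF HzHF2F3[where r=r and t=t and k=k]])
    fix z assume h: "r > 0 \<longrightarrow> (\<forall>pR. cHF2F3_4 k r t z pR \<noteq> 0)"
    show "\<forall>pR. countable {pS. \<not> goodHF2F3 k (r,t,z,pR,pS)}"
    proof
      fix pR show "countable {pS. \<not> goodHF2F3 k (r,t,z,pR,pS)}"
      proof (cases "r > 0")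
        case True then show ?thesis using h finiteHF2F3 by blast
      next
        case False then have "{pS. \<not> goodHF2F3 k (r,t,z,pR,pS)} = {}" by (auto simp: goodHF2F3_def)
        then show ?thesis by simp
      qed
    qed
  qed
next
  fix x assume g: "goodHF2F3 k x"
  show "in_dom x \<longrightarrow> func_indep_at [Ham k, F2 k, F3 k] x"
  proof
    assume "in_dom x"
    obtain r t z pR pS where x: "x = (r,t,z,pR,pS)" by (cases x) auto
    have r: "r > 0" using \<open>in_dom x\<close> x by (simp add: in_dom_def)
    have "det3 (fst (gH k (r,t,z,pR,pS))) (cpR (gH k (r,t,z,pR,pS))) (cpS (gH k (r,t,z,pR,pS))) (fst (gF2 k (r,t,z,pR,pS))) (cpR (gF2 k (r,t,z,pR,pS))) (cpS (gF2 k (r,t,z,pR,pS))) (fst (gF3 k (r,t,z,pR,pS))) (cpR (gF3 k (r,t,z,pR,pS))) (cpS (gF3 k (r,t,z,pR,pS))) \<noteq> 0"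
      using g r x detHF2F3[OF r] by (simp add: goodHF2F3_def PHF2F3_def)
    then show "func_indep_at [Ham k, F2 k, F3 k] x"
      unfolding x by (rule indep_from_det[OF deriv_H[OF r] deriv_F2[OF r] deriv_F3[OF r]])
  qed
qed
definition cF1F2F3_0 :: "real \<Rightarrow> real \<Rightarrow> real \<Rightarrow> real \<Rightarrow> real \<Rightarrow> real" where
  "cF1F2F3_0 k r t z pR = (- (16 * r^2 * z^2 * pR^2 * k * (uu r z) * sin (2*t)^2) - 16 * r^2 * z^2 * pR^2 * k * (uu r z) * cos (2*t)^2 + 256 * r^2 * z^4 * pR^2 * k * (uu r z)^3 * sin (2*t)^2 + 256 * r^2 * z^4 * pR^2 * k * (uu r z)^3 * cos (2*t)^2 + 16 * r^6 * z^2 * pR^2 * k * (uu r z)^3 * sin (2*t)^2 + 16 * r^6 * z^2 * pR^2 * k * (uu r z)^3 * cos (2*t)^2)"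
definition cF1F2F3_1 :: "real \<Rightarrow> real \<Rightarrow> real \<Rightarrow> real \<Rightarrow> real \<Rightarrow> real" where
  "cF1F2F3_1 k r t z pR = (128 * z^3 * pR * k * (uu r z) * sin (2*t)^2 / (r) + 128 * z^3 * pR * k * (uu r z) * cos (2*t)^2 / (r) + 64 * z^3 * pR^3 * sin (2*t)^2 / (r) + 64 * z^3 * pR^3 * cos (2*t)^2 / (r) + 16 * r^3 * z * pR * k * (uu r z) * sin (2*t)^2 + 16 * r^3 * z * pR * k * (uu r z) * cos (2*t)^2 - 256 * r^3 * z^3 * pR * k * (uu r z)^3 * sin (2*t)^2 - 256 * r^3 * z^3 * pR * k * (uu r z)^3 * cos (2*t)^2 - 16 * r^7 * z * pR * k * (uu r z)^3 * sin (2*t)^2 - 16 * r^7 * z * pR * k * (uu r z)^3 * cos (2*t)^2)"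
definition cF1F2F3_2 :: "real \<Rightarrow> real \<Rightarrow> real \<Rightarrow> real \<Rightarrow> real \<Rightarrow> real" where
  "cF1F2F3_2 k r t z pR = (- (48 * z^2 * k * (uu r z) * sin (2*t)^2) - 48 * z^2 * k * (uu r z) * cos (2*t)^2 - 80 * z^2 * pR^2 * sin (2*t)^2 - 80 * z^2 * pR^2 * cos (2*t)^2 + 256 * z^4 * k * (uu r z)^3 * sin (2*t)^2 + 256 * z^4 * k * (uu r z)^3 * cos (2*t)^2 - 4 * r^4 * k * (uu r z) * sin (2*t)^2 - 4 * r^4 * k * (uu r z) * cos (2*t)^2 + 80 * r^4 * z^2 * k * (uu r z)^3 * sin (2*t)^2 + 80 * r^4 * z^2 * k * (uu r z)^3 * cos (2*t)^2 + 4 * r^8 * k * (uu r z)^3 * sin (2*t)^2 + 4 * r^8 * k * (uu r z)^3 * cos (2*t)^2)"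
definition cF1F2F3_3 :: "real \<Rightarrow> real \<Rightarrow> real \<Rightarrow> real \<Rightarrow> real \<Rightarrow> real" where
  "cF1F2F3_3 k r t z pR = (64 * z^3 * pR * sin (2*t)^2 / (r^3) + 64 * z^3 * pR * cos (2*t)^2 / (r^3) + 32 * r * z * pR * sin (2*t)^2 + 32 * r * z * pR * cos (2*t)^2)"
definition cF1F2F3_4 :: "real \<Rightarrow> real \<Rightarrow> real \<Rightarrow> real \<Rightarrow> real \<Rightarrow> real" where
  "cF1F2F3_4 k r t z pR = (- (16 * z^2 * sin (2*t)^2 / (r^2)) - 16 * z^2 * cos (2*t)^2 / (r^2) - 4 * r^2 * sin (2*t)^2 - 4 * r^2 * cos (2*t)^2)"

lemma HzF1F2F3: "AE z in lborel. r > 0 \<longrightarrow> (\<forall>pR. cF1F2F3_4 k r t z pR \<noteq> 0)"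
proof (rule AE_I2, intro impI allI)
  fix z pR assume r: "(r::real) > 0"
  obtain s c where sc: "sin (2*t) = s" "cos (2*t) = c" by blast
  have cs: "s^2 + c^2 = 1" using sc sin_cos_squared_add[of "2*t"] by simp
  have "cF1F2F3_4 k r t z pR * r^2 = - (16 * z^2 + 4 * r^4) * (s^2 + c^2)" using r
    unfolding cF1F2F3_4_def sc by (simp add: field_simps)
  then have "cF1F2F3_4 k r t z pR * r^2 = - (16 * z^2 + 4 * r^4)" using cs by simp
  moreover have "16 * z^2 + 4 * r^4 > 0" using r by (simp add: add_nonneg_pos)
  ultimately show "cF1F2F3_4 k r t z pR \<noteq> 0" by auto
qed

definition PF1F2F3 :: "real \<Rightarrow> st \<Rightarrow> real" where
  "PF1F2F3 k x = cF1F2F3_0 k (fst x) (fst (snd x)) (fst (snd (snd x))) (fst (snd (snd (snd x)))) + cF1F2F3_1 k (fst x) (fst (snd x)) (fst (snd (snd x))) (fst (snd (snd (snd x)))) * (snd (snd (snd (snd x)))) + cF1F2F3_2 k (fst x) (fst (snd x)) (fst (snd (snd x))) (fst (snd (snd (snd x)))) * (snd (snd (snd (snd x))))^2 + cF1F2F3_3 k (fst x) (fst (snd x)) (fst (snd (snd x))) (fst (snd (snd (snd x)))) * (snd (snd (snd (snd x))))^3 + cF1F2F3_4 k (fst x) (fst (snd x)) (fst (snd (snd x))) (fst (snd (snd (snd x)))) * (snd (snd (snd (snd x))))^4"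

definition goodF1F2F3 :: "real \<Rightarrow> st \<Rightarrow> bool" where
  "goodF1F2F3 k x \<longleftrightarrow> (fst x > 0 \<longrightarrow> PF1F2F3 k x \<noteq> 0)"

lemma measF1F2F3: "Measurable.pred borel (goodF1F2F3 k)"
  unfolding goodF1F2F3_def PF1F2F3_def cF1F2F3_0_def cF1F2F3_1_def cF1F2F3_2_def cF1F2F3_3_def cF1F2F3_4_def uu_def by (rule pred_prod5) measurable

lemma detF1F2F3: assumes "r > 0"
  shows "det3 (fst (gF1 k (r,t,z,pR,pS))) (cpR (gF1 k (r,t,z,pR,pS))) (cpS (gF1 k (r,t,z,pR,pS))) (fst (gF2 k (r,t,z,pR,pS))) (cpR (gF2 k (r,t,z,pR,pS))) (cpS (gF2 k (r,t,z,pR,pS))) (fst (gF3 k (r,t,z,pR,pS))) (cpR (gF3 k (r,t,z,pR,pS))) (cpS (gF3 k (r,t,z,pR,pS))) = cF1F2F3_0 k r t z pR + cF1F2F3_1 k r t z pR * pS + cF1F2F3_2 k r t z pR * pS^2 + cF1F2F3_3 k r t z pR * pS^3 + cF1F2F3_4 k r t z pR * pS^4"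
proof -
  have rne: "r \<noteq> 0" using assms by simp
  obtain ir where ir: "inverse r = ir" by blast
  have rir: "r * ir = 1" using ir rne by auto
  have d1: "\<And>a::real. a / r = a * ir" using ir by (simp add: divide_inverse)
  have d2: "\<And>(a::real) n. a / r ^ n = a * ir ^ n" unfolding ir[symmetric] by (metis divide_inverse power_inverse)
  have d3: "\<And>a::real. a / (r^4 + 16*z^2) powr (3/2) = a * (uu r z)^3" using powr32u[OF assms] by simp
  obtain cc ss where cs: "cos (2*t) = cc" "sin (2*t) = ss" by blast
  have cs1: "cc^2 + ss^2 = 1" using cs sin_cos_squared_add[of "2*t"] by simp
  have d4: "\<And>a::real. a / sqrt (r^4 + 16*z^2) = a * uu r z" by (simp add: uu_def)
  have "det3 (fst (gF1 k (r,t,z,pR,pS))) (cpR (gF1 k (r,t,z,pR,pS))) (cpS (gF1 k (r,t,z,pR,pS))) (fst (gF2 k (r,t,z,pR,pS))) (cpR (gF2 k (r,t,z,pR,pS))) (cpS (gF2 k (r,t,z,pR,pS))) (fst (gF3 k (r,t,z,pR,pS))) (cpR (gF3 k (r,t,z,pR,pS))) (cpS (gF3 k (r,t,z,pR,pS))) - (cF1F2F3_0 k r t z pR + cF1F2F3_1 k r t z pR * pS + cF1F2F3_2 k r t z pR * pS^2 + cF1F2F3_3 k r t z pR * pS^3 + cF1F2F3_4 k r t z pR * pS^4) = (r*ir - 1) * (- (48 * z^2 * pS^2 * k * (uu r z) * ss^2) - 48 * z^2 * pS^2 * k * (uu r z) * cc^2 - 16 * z^2 * pS^4 * ss^2 *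 ir^2 - 16 * z^2 * pS^4 * cc^2 * ir^2 - 64 * z^2 * pR^2 * pS^2 * ss^2 - 64 * z^2 * pR^2 * pS^2 * cc^2 + 128 * z^3 * pR * pS * k * (uu r z) * ss^2 * ir + 128 * z^3 * pR * pS * k * (uu r z) * cc^2 * ir + 96 * z^3 * pR * pS^3 * ss^2 * ir^3 + 96 * z^3 * pR * pS^3 * cc^2 * ir^3 + 32 * z^3 * pR^3 * pS * ss^2 * ir + 32 * z^3 * pR^3 * pS * cc^2 * ir + 256 * z^4 * pS^2 * k * (uu r z)^3 * ss^2 + 256 * z^4 * pS^2 * k * (uu r z)^3 * cc^2 + 16 * r * z * pR * pS^3 * ss^2 + 16 * r * z * pR * pS^3 * cc^2 - 48 * r * z^2 * pS^2 * k * (uu r z) * ss^2 * ir - 48 * r * z^2 * pS^2 * k * (uu r z) * cc^2 * ir - 32 * r * z^2 * pS^4 * ss^2 * ir^3 - 32 * r * z^2 * pS^4 * cc^2 * ir^3 - 32 * r * z^2 * pR^2 * pS^2 * ss^2 * ir - 32 * r * z^2 * pR^2 * pS^2 * cc^2 * ir + 256 * r * z^4 * pS^2 * k * (uu r z)^3 * ss^2 * ir + 256 * r * z^4 * pS^2 * k * (uu r z)^3 * cc^2 * ir + 8 * r^2 * z * pR * pS^3 * ss^2 * ir + 8 * r^2 * z * pR * pS^3 * cc^2 * ir + 256 * r^2 * z^4 * pS^2 * k * (uu r z)^3 * ss^2 * ir^2 + 256 * r^2 * z^4 * pS^2 * k * (uu r z)^3 * cc^2 * ir^2 + 256 * r^2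 * z^4 * pR^2 * k * (uu r z)^3 * ss^2 + 256 * r^2 * z^4 * pR^2 * k * (uu r z)^3 * cc^2 - 128 * r^3 * z^3 * pR * pS * k * (uu r z)^3 * ss^2 - 128 * r^3 * z^3 * pR * pS * k * (uu r z)^3 * cc^2 + 48 * r^4 * z^2 * pS^2 * k * (uu r z)^3 * ss^2 + 48 * r^4 * z^2 * pS^2 * k * (uu r z)^3 * cc^2 - 128 * r^4 * z^3 * pR * pS * k * (uu r z)^3 * ss^2 * ir - 128 * r^4 * z^3 * pR * pS * k * (uu r z)^3 * cc^2 * ir + 48 * r^5 * z^2 * pS^2 * k * (uu r z)^3 * ss^2 * ir + 48 * r^5 * z^2 * pS^2 * k * (uu r z)^3 * cc^2 * ir)"
    apply (simp add: det3_def cpR_def cpS_def gF1_def gF2_def gF3_def Let_def cF1F2F3_0_def cF1F2F3_1_def cF1F2F3_2_def cF1F2F3_3_def cF1F2F3_4_def d1 d2 d4 cs)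
    apply algebra
    done
  then show ?thesis using rir by simp
qed

lemma finiteF1F2F3: assumes "r > 0" "cF1F2F3_4 k r t z pR \<noteq> 0"
  shows "countable {pS. \<not> goodF1F2F3 k (r,t,z,pR,pS)}"
proof -
  have "finite {pS. cF1F2F3_0 k r t z pR + cF1F2F3_1 k r t z pR * pS + cF1F2F3_2 k r t z pR * pS^2 + cF1F2F3_3 k r t z pR * pS^3 + cF1F2F3_4 k r t z pR * pS^4 = 0}"
    using assms(2) by (rule quartic_finite)
  moreover have "{pS. \<not> goodF1F2F3 k (r,t,z,pR,pS)} \<subseteq> {pS. cF1F2F3_0 k r t z pR + cF1F2F3_1 k r t z pR * pS + cF1F2F3_2 k r t z pR * pS^2 + cF1F2F3_3 k r t z pR * pS^3 + cF1F2F3_4 k r t z pR * pS^4 = 0}"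
    by (auto simp: goodF1F2F3_def PF1F2F3_def)
  ultimately show ?thesis by (meson countable_finite finite_subset)
qed

lemma indepF1F2F3:
  shows "func_indep_ae [F1 k, F2 k, F3 k]"
  unfolding func_indep_ae_def
proof (rule eventually_mono[OF AE_st[OF measF1F2F3]])
  fix r t
  show "AE z in lborel. \<forall>pR. countable {pS. \<not> goodF1F2F3 k (r,t,z,pR,pS)}"
  proof (rule eventually_mono[OF HzF1F2F3[where r=r and t=t and k=k]])
    fix z assume h: "r > 0 \<longrightarrow> (\<forall>pR. cF1F2F3_4 k r t z pR \<noteq> 0)"
    show "\<forall>pR. countable {pS. \<not> goodF1F2F3 k (r,t,z,pR,pS)}"
    proof
      fix pR show "countable {pS. \<not> goodF1F2F3 k (r,t,z,pR,pS)}"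
      proof (cases "r > 0")
        case True then show ?thesis using h finiteF1F2F3 by blast
      next
        case False then have "{pS. \<not> goodF1F2F3 k (r,t,z,pR,pS)} = {}" by (auto simp: goodF1F2F3_def)
        then show ?thesis by simp
      qed
    qed
  qed
next
  fix x assume g: "goodF1F2F3 k x"
  show "in_dom x \<longrightarrow> func_indep_at [F1 k, F2 k, F3 k] x"
  proof
    assume "in_dom x"
    obtain r t z pR pS where x: "x = (r,t,z,pR,pS)" by (cases x) auto
    have r: "r > 0" using \<open>in_dom x\<close> x by (simp add: in_dom_def)
    have "det3 (fst (gF1 k (r,t,z,pR,pS))) (cpR (gF1 k (r,t,z,pR,pS))) (cpS (gF1 k (r,t,z,pR,pS))) (fst (gF2 k (r,t,z,pR,pS))) (cpR (gF2 k (r,t,z,pR,pS))) (cpS (gF2 k (r,t,z,pR,pS))) (fst (gF3 k (r,t,z,pR,pS))) (cpR (gF3 k (r,t,z,pR,pS))) (cpS (gF3 k (r,t,z,pR,pS))) \<noteq> 0"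
      using g r x detF1F2F3[OF r] by (simp add: goodF1F2F3_def PF1F2F3_def)
    then show "func_indep_at [F1 k, F2 k, F3 k] x"
      unfolding x by (rule indep_from_det[OF deriv_F1[OF r] deriv_F2[OF r] deriv_F3[OF r]])
  qed
qed

lemma first_integral_from:
  assumes deriv: "\<And>r t z pR pS. r > 0 \<Longrightarrow> (F has_derivative (\<lambda>h. dot (g (r,t,z,pR,pS)) h)) (at (r,t,z,pR,pS))"
    and flow: "\<And>r t z pR pS. r > 0 \<Longrightarrow> dot (g (r,t,z,pR,pS)) (hvf k (r,t,z,pR,pS)) = 0"
  shows "first_integral k F"
  unfolding first_integral_def
proof (intro allI impI)
  fix \<gamma> :: "real \<Rightarrow> st" and I :: "real set"
  assume a: "is_interval I \<and> is_solution k \<gamma> I"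
  have "\<exists>c. \<forall>x\<in>I. F (\<gamma> x) = c"
  proof (rule has_derivative_zero_constant)
    show "convex I" using a by (simp add: is_interval_convex)
  next
    fix s assume s: "s \<in> I"
    obtain r t z pR pS where x: "\<gamma> s = (r,t,z,pR,pS)" by (cases "\<gamma> s") auto
    have sol: "in_dom (\<gamma> s)" "(\<gamma> has_vector_derivative hvf k (\<gamma> s)) (at s within I)"
      using a s by (auto simp: is_solution_def)
    have r: "r > 0" using sol(1) x by (simp add: in_dom_def)
    have dF: "(F has_derivative (\<lambda>h. dot (g (\<gamma> s)) h)) (at (\<gamma> s))" using deriv[OF r] x by simp
    have dg: "(\<gamma> has_derivative (\<lambda>h. h *\<^sub>R hvf k (\<gamma> s))) (at s within I)"
      using sol(2) by (simp add: has_vector_derivative_def)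
    have "((\<lambda>x. F (\<gamma> x)) has_derivative (\<lambda>h. dot (g (\<gamma> s)) (h *\<^sub>R hvf k (\<gamma> s)))) (at s within I)"
      by (rule has_derivative_compose[OF dg dF])
    moreover have "(\<lambda>h. dot (g (\<gamma> s)) (h *\<^sub>R hvf k (\<gamma> s))) = (\<lambda>h. h * dot (g (\<gamma> s)) (hvf k (\<gamma> s)))"
      by (rule ext) (simp add: dot_def algebra_simps)
    moreover have "dot (g (\<gamma> s)) (hvf k (\<gamma> s)) = 0" using flow[OF r] x by simp
    ultimately show "((\<lambda>x. F (\<gamma> x)) has_derivative (\<lambda>h. 0)) (at s within I)" by simp
  qed
  then show "\<forall>s\<in>I. \<forall>t\<in>I. F (\<gamma> s) = F (\<gamma> t)" by metis
qed

theorem theorem2: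
  fixes k :: real
  assumes "k > 0"
  shows "first_integral k (F1 k) \<and> first_integral k (F2 k) \<and> first_integral k (F3 k)
    \<and> func_indep_ae [Ham k, F1 k, F2 k]
    \<and> func_indep_ae [Ham k, F1 k, F3 k]
    \<and> func_indep_ae [Ham k, F2 k, F3 k]
    \<and> func_indep_ae [F1 k, F2 k, F3 k]
    \<and> (\<forall>x. in_dom x \<longrightarrow> (F1 k x)\<^sup>2 + (F2 k x)\<^sup>2 = 2 * Ham k x * F3 k x + k\<^sup>2)"
proof (intro conjI)
  show "first_integral k (F1 k)" by (rule first_integral_from[OF deriv_F1 flow_F1])
  show "first_integral k (F2 k)" by (rule first_integral_from[OF deriv_F2 flow_F2])
  show "first_integral k (F3 k)" by (rule first_integral_from[OF deriv_F3 flow_F3])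
  show "func_indep_ae [Ham k, F1 k, F2 k]" by (rule indepHF1F2)
  show "func_indep_ae [Ham k, F1 k, F3 k]" by (rule indepHF1F3)
  show "func_indep_ae [Ham k, F2 k, F3 k]" by (rule indepHF2F3)
  show "func_indep_ae [F1 k, F2 k, F3 k]" by (rule indepF1F2F3)
  show "\<forall>x. in_dom x \<longrightarrow> (F1 k x)\<^sup>2 + (F2 k x)\<^sup>2 = 2 * Ham k x * F3 k x + k\<^sup>2"
  proof (intro allI impI)
    fix x assume d: "in_dom x"
    obtain r t z pR pS where x: "x = (r,t,z,pR,pS)" by (cases x) auto
    have r: "r > 0" using d x by (simp add: in_dom_def)
    show "(F1 k x)\<^sup>2 + (F2 k x)\<^sup>2 = 2 * Ham k x * F3 k x + k\<^sup>2" unfolding x by (rule rel_F[OF r])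
  qed
qed

end
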